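(* Let $A$ be a complex semisimple Banach algebra with a unit, and suppose that $\mathrm{Soc}(A)\neq\{0\}$. Then $\mathrm{Soc}(A)$, regarded as a normed algebra with the norm of $A$, has a two-sided approximate identity. *)

theory Defs
  imports "HOL-Analysis.Analysis"
begin

text \<open>HOL-Analysis only provides real normed
algebras, so we add a complex scalar multiplication compatible with the real one,
with the norm and with the multiplication.  The unit is not required to have norm 1.\<close>

class complex_banach_algebra_1 = real_normed_algebra + real_algebra_1 + banach +
  fixes scaleC :: "complex \<Rightarrow> 'a \<Rightarrow> 'a"
  assumes scaleC_add_right: "scaleC c (x + y) = scaleC c x + scaleC c y"
    and scaleC_add_left: "scaleC (c + d) x = scaleC c x + scaleC d x"
    and scaleC_scaleC: "scaleC c (scaleC d x) = scaleC (c * d) x"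
    and scaleC_one: "scaleC 1 x = x"
    and scaleR_scaleC: "scaleR r x = scaleC (complex_of_real r) x"
    and norm_scaleC: "norm (scaleC c x) = norm c * norm x"
    and mult_scaleC_left: "scaleC c x * y = scaleC c (x * y)"
    and mult_scaleC_right: "x * scaleC c y = scaleC c (x * y)"

definition left_ideal :: "'a::complex_banach_algebra_1 set \<Rightarrow> bool" where
  "left_ideal L \<longleftrightarrow> 0 \<in> L \<and> (\<forall>x\<in>L. \<forall>y\<in>L. x + y \<in> L) \<and>
     (\<forall>c. \<forall>x\<in>L. scaleC c x \<in> L) \<and> (\<forall>a. \<forall>x\<in>L. a * x \<in> L)"

definition maximal_left_ideal :: "'a::complex_banach_algebra_1 set \<Rightarrow> bool" where
  "maximal_left_ideal L \<longleftrightarrow> left_ideal L \<and> L \<noteq> UNIV \<and>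
     (\<forall>M. left_ideal M \<and> L \<subseteq> M \<and> M \<noteq> UNIV \<longrightarrow> M = L)"

definition minimal_left_ideal :: "'a::complex_banach_algebra_1 set \<Rightarrow> bool" where
  "minimal_left_ideal L \<longleftrightarrow> left_ideal L \<and> L \<noteq> {0} \<and>
     (\<forall>M. left_ideal M \<and> M \<subseteq> L \<and> M \<noteq> {0} \<longrightarrow> M = L)"

definition jacobson_radical :: "'a::complex_banach_algebra_1 set" where
  "jacobson_radical = \<Inter> {L. maximal_left_ideal L}"

definition semisimple :: "'a::complex_banach_algebra_1 itself \<Rightarrow> bool" where
  "semisimple _ \<longleftrightarrow> (jacobson_radical :: 'a set) = {0}"

text \<open>Socle: the sum of all minimal left ideals (= set of finite sums of elements
of minimal left ideals; it is {0} if there are no minimal left ideals).\<close>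
definition socle :: "'a::complex_banach_algebra_1 set" where
  "socle = {sum_list xs | xs. \<forall>x\<in>set xs. \<exists>L. minimal_left_ideal L \<and> x \<in> L}"

text \<open>Nets in 'a are represented, as usual in Isabelle, by proper filters on 'a
(the filter generated by the tails of the net).\<close>
definition has_two_sided_approx_identity :: "'a::complex_banach_algebra_1 set \<Rightarrow> bool" where
  "has_two_sided_approx_identity S \<longleftrightarrow>
     (\<exists>F :: 'a filter. F \<noteq> bot \<and> eventually (\<lambda>e. e \<in> S) F \<and>
        (\<forall>a\<in>S. ((\<lambda>e. e * a) \<longlongrightarrow> a) F \<and> ((\<lambda>e. a * e) \<longlongrightarrow> a) F))"

end

theory Submission
  imports Defs
begin

lemma scaleC_zero_right: "scaleC c (0::'a::complex_banach_algebra_1) = 0"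
proof -
  have "scaleC c (0::'a) = scaleC c (0 + 0)" by simp
  also have "... = scaleC c 0 + scaleC c 0" by (rule scaleC_add_right)
  finally show ?thesis by simp
qed

lemma li_0: "left_ideal L \<Longrightarrow> 0 \<in> L" by (simp add: left_ideal_def)
lemma li_add: "left_ideal L \<Longrightarrow> x \<in> L \<Longrightarrow> y \<in> L \<Longrightarrow> x + y \<in> L" by (simp add: left_ideal_def)
lemma li_mult: "left_ideal L \<Longrightarrow> x \<in> L \<Longrightarrow> a * x \<in> L" by (simp add: left_ideal_def)
lemma li_diff: "left_ideal L \<Longrightarrow> x \<in> L \<Longrightarrow> y \<in> L \<Longrightarrow> x - y \<in> L"
proof -
  assume L: "left_ideal L" and x: "x \<in> L" and y: "y \<in> L"
  have "(-1) * y \<in> L" using li_mult[OF L y] .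
  hence "x + (-1) * y \<in> L" using li_add[OF L x] by blast
  thus ?thesis by simp
qed

lemma semiprime:
  fixes x :: "'a::complex_banach_algebra_1"
  assumes ss: "semisimple TYPE('a)" and h: "\<And>a. x * a * x = 0"
  shows "x = 0"
proof -
  have "x \<in> jacobson_radical"
    unfolding jacobson_radical_def
  proof (rule InterI, clarsimp)
    fix M :: "'a set" assume M: "maximal_left_ideal M"
    hence LM: "left_ideal M" and MU: "M \<noteq> UNIV"
      and mx: "\<And>N. left_ideal N \<Longrightarrow> M \<subseteq> N \<Longrightarrow> N \<noteq> UNIV \<Longrightarrow> N = M"
      by (auto simp: maximal_left_ideal_def)
    show "x \<in> M"
    proof (rule ccontr)
      assume xM: "x \<notin> M"
      define N where "N = {m + a * x | m a. m \<in> M}"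
      have LN: "left_ideal N" unfolding left_ideal_def
      proof (intro conjI ballI allI)
        show "0 \<in> N" unfolding N_def using li_0[OF LM] by (auto intro!: exI[of _ 0])
      next
        fix y z assume "y \<in> N" "z \<in> N"
        then obtain m1 a1 m2 a2 where "y = m1 + a1 * x" "m1 \<in> M" "z = m2 + a2 * x" "m2 \<in> M"
          unfolding N_def by blast
        hence "y + z = (m1 + m2) + (a1 + a2) * x" "m1 + m2 \<in> M" using li_add[OF LM]
          by (auto simp: algebra_simps)
        thus "y + z \<in> N" unfolding N_def by blast
      next
        fix c y assume "y \<in> N"
        then obtain m a where "y = m + a * x" "m \<in> M" unfolding N_def by blast
        moreover have "scaleC c m \<in> M" using LM \<open>m \<in> M\<close> by (simp add: left_ideal_def)
        ultimately have "scaleC c y = scaleC c m + scaleC c a * x" "scaleC c m \<in> M"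
          by (auto simp: scaleC_add_right mult_scaleC_left)
        thus "scaleC c y \<in> N" unfolding N_def by blast
      next
        fix b y assume "y \<in> N"
        then obtain m a where "y = m + a * x" "m \<in> M" unfolding N_def by blast
        hence "b * y = b * m + (b * a) * x" "b * m \<in> M" using li_mult[OF LM]
          by (auto simp: algebra_simps)
        thus "b * y \<in> N" unfolding N_def by blast
      qed
      have MN: "M \<subseteq> N"
      proof
        fix m assume "m \<in> M"
        moreover have "m = m + 0 * x" by simp
        ultimately show "m \<in> N" unfolding N_def by blast
      qed
      have "x = 0 + 1 * x" by simp
      hence "x \<in> N" unfolding N_def using li_0[OF LM] by blast
      hence "N = UNIV" using mx[OF LN MN] xM by blast
      then obtain m a where m: "m \<in> M" and one: "1 = m + a * x" unfolding N_def by blast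
      define y where "y = a * x"
      have yy: "y * y = 0" unfolding y_def using h[of a]
        by (metis mult.assoc mult_zero_right)
      have "m = 1 - y" using one y_def by (simp add: algebra_simps)
      moreover have "(1 + y) * (1 - y) = 1 - y * y" by (simp add: algebra_simps)
      ultimately have "(1 + y) * m = 1 - y * y" by simp
      hence "(1 + y) * m = 1" using yy by simp
      hence "1 \<in> M" using li_mult[OF LM m, of "1 + y"] by simp
      hence "\<And>b. b \<in> M" using li_mult[OF LM] by (metis mult_1_right)
      thus False using MU by blast
    qed
  qed
  moreover have "(jacobson_radical :: 'a set) = {0}" using ss unfolding semisimple_def .
  ultimately show ?thesis by blast
qed

lemma min_li: "minimal_left_ideal L \<Longrightarrow> left_ideal L"
  by (simp add: minimal_left_ideal_def)

lemma min_min: "minimal_left_ideal L \<Longrightarrow> left_ideal M \<Longrightarrow> M \<subseteq> L \<Longrightarrow> M \<noteq> {0} \<Longrightarrow> M = L"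
  by (simp add: minimal_left_ideal_def)

lemma regular:
  fixes z :: "'a::complex_banach_algebra_1"
  assumes ss: "semisimple TYPE('a)" and L: "minimal_left_ideal L" and zL: "z \<in> L"
  shows "\<exists>c. z * c * z = z"
proof (cases "z = 0")
  case True thus ?thesis by simp
next
  case False
  have LL: "left_ideal L" using L by (rule min_li)
  obtain a where za: "z * a * z \<noteq> 0" using semiprime[OF ss] False by blast
  define y where "y = a * z"
  have yL: "y \<in> L" unfolding y_def using li_mult[OF LL zL] .
  have zy: "z * y \<noteq> 0" using za by (simp add: y_def mult.assoc)
  hence y0: "y \<noteq> 0" by auto
  define Ly where "Ly = {w * y | w. w \<in> L}"
  have LLy: "left_ideal Ly" unfolding left_ideal_def
  proof (intro conjI ballI allI)
    show "0 \<in> Ly" unfolding Ly_def using li_0[OF LL] by force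
  next
    fix u v assume "u \<in> Ly" "v \<in> Ly"
    then obtain w1 w2 where "u = w1 * y" "v = w2 * y" "w1 \<in> L" "w2 \<in> L" unfolding Ly_def by blast
    hence "u + v = (w1 + w2) * y" "w1 + w2 \<in> L" using li_add[OF LL] by (auto simp: algebra_simps)
    thus "u + v \<in> Ly" unfolding Ly_def by blast
  next
    fix c u assume "u \<in> Ly"
    then obtain w where "u = w * y" "w \<in> L" unfolding Ly_def by blast
    hence "scaleC c u = scaleC c w * y" "scaleC c w \<in> L" using LL
      by (auto simp: mult_scaleC_left left_ideal_def)
    thus "scaleC c u \<in> Ly" unfolding Ly_def by blast
  next
    fix b u assume "u \<in> Ly"
    then obtain w where "u = w * y" "w \<in> L" unfolding Ly_def by blast
    hence "b * u = (b * w) * y" "b * w \<in> L" using li_mult[OF LL] by (auto simp: mult.assoc)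
    thus "b * u \<in> Ly" unfolding Ly_def by blast
  qed
  have "Ly \<subseteq> L" unfolding Ly_def using li_mult[OF LL yL] by blast
  moreover have "Ly \<noteq> {0}" using zy zL unfolding Ly_def by blast
  ultimately have "Ly = L" using min_min[OF L LLy] by blast
  then obtain e where eL: "e \<in> L" and ey: "e * y = y" using yL unfolding Ly_def by force
  define N where "N = {w \<in> L. w * y = 0}"
  have LN: "left_ideal N" unfolding left_ideal_def N_def
    using LL by (auto simp: left_ideal_def algebra_simps mult_scaleC_left mult.assoc scaleC_zero_right)
  have "e \<notin> N" using ey y0 unfolding N_def by auto
  hence "N \<noteq> L" using eL by blast
  hence N0: "N = {0}" using min_min[OF L LN] unfolding N_def by blast
  have "z * e - z \<in> L" using li_diff[OF LL li_mult[OF LL eL] zL] .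
  moreover have "(z * e - z) * y = 0" using ey by (simp add: algebra_simps mult.assoc)
  ultimately have "z * e - z \<in> N" unfolding N_def by blast
  hence ze: "z * e = z" using N0 by simp
  define Az where "Az = {b * z | b. True}"
  have LAz: "left_ideal Az" unfolding left_ideal_def Az_def
  proof (intro conjI ballI allI)
    show "0 \<in> {b * z |b. True}" by (auto intro!: exI[of _ 0])
  next
    fix u v assume "u \<in> {b * z |b. True}" "v \<in> {b * z |b. True}"
    then obtain b1 b2 where "u = b1 * z" "v = b2 * z" by blast
    hence "u + v = (b1 + b2) * z" by (simp add: algebra_simps)
    thus "u + v \<in> {b * z |b. True}" by blast
  next
    fix c u assume "u \<in> {b * z |b. True}"
    then obtain b where "u = b * z" by blast
    hence "scaleC c u = scaleC c b * z" by (simp add: mult_scaleC_left)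
    thus "scaleC c u \<in> {b * z |b. True}" by blast
  next
    fix d u assume "u \<in> {b * z |b. True}"
    then obtain b where "u = b * z" by blast
    hence "d * u = (d * b) * z" by (simp add: mult.assoc)
    thus "d * u \<in> {b * z |b. True}" by blast
  qed
  have "Az \<subseteq> L" unfolding Az_def using li_mult[OF LL zL] by blast
  moreover have "z \<in> Az" unfolding Az_def by (auto intro!: exI[of _ 1])
  ultimately have "Az = L" using min_min[OF L LAz] False by blast
  then obtain c where "e = c * z" using eL unfolding Az_def by blast
  hence "z * c * z = z" using ze by (simp add: mult.assoc)
  thus ?thesis by blast
qed

definition PP :: "'a::complex_banach_algebra_1 \<Rightarrow> bool" where
  "PP x \<longleftrightarrow> x = 0 \<or> (\<exists>L. minimal_left_ideal L \<and> x \<in> L)"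

lemma PP_left: "PP x \<Longrightarrow> PP (a * x)"
  unfolding PP_def using li_mult min_li by fastforce

lemma Lc_min:
  fixes z :: "'a::complex_banach_algebra_1"
  assumes L: "minimal_left_ideal L" and zL: "z \<in> L"
  shows "PP (z * c)"
proof -
  have LL: "left_ideal L" using L by (rule min_li)
  define Lc where "Lc = {w * c | w. w \<in> L}"
  have LLc: "left_ideal Lc" unfolding left_ideal_def
  proof (intro conjI ballI allI)
    show "0 \<in> Lc" unfolding Lc_def using li_0[OF LL] by force
  next
    fix u v assume "u \<in> Lc" "v \<in> Lc"
    then obtain w1 w2 where "u = w1 * c" "v = w2 * c" "w1 \<in> L" "w2 \<in> L" unfolding Lc_def by blast
    hence "u + v = (w1 + w2) * c" "w1 + w2 \<in> L" using li_add[OF LL] by (auto simp: algebra_simps)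
    thus "u + v \<in> Lc" unfolding Lc_def by blast
  next
    fix d u assume "u \<in> Lc"
    then obtain w where "u = w * c" "w \<in> L" unfolding Lc_def by blast
    hence "scaleC d u = scaleC d w * c" "scaleC d w \<in> L" using LL
      by (auto simp: mult_scaleC_left left_ideal_def)
    thus "scaleC d u \<in> Lc" unfolding Lc_def by blast
  next
    fix b u assume "u \<in> Lc"
    then obtain w where "u = w * c" "w \<in> L" unfolding Lc_def by blast
    hence "b * u = (b * w) * c" "b * w \<in> L" using li_mult[OF LL] by (auto simp: mult.assoc)
    thus "b * u \<in> Lc" unfolding Lc_def by blast
  qed
  have zc: "z * c \<in> Lc" unfolding Lc_def using zL by blast
  show ?thesis
  proof (cases "Lc = {0}")
    case True thus ?thesis using zc unfolding PP_def by blast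
  next
    case False
    have "minimal_left_ideal Lc" unfolding minimal_left_ideal_def
    proof (intro conjI allI impI LLc False)
      fix M assume M: "left_ideal M \<and> M \<subseteq> Lc \<and> M \<noteq> {0}"
      define N where "N = {w \<in> L. w * c \<in> M}"
      have LN: "left_ideal N" unfolding left_ideal_def N_def
        using LL M by (auto simp: left_ideal_def algebra_simps mult_scaleC_left mult.assoc)
      have "N \<noteq> {0}"
      proof
        assume N0: "N = {0}"
        obtain m where "m \<in> M" "m \<noteq> 0" using M li_0 by blast
        then obtain w where "m = w * c" "w \<in> L" using M unfolding Lc_def by blast
        hence "w \<in> N" using \<open>m \<in> M\<close> unfolding N_def by blast
        thus False using N0 \<open>m = w * c\<close> \<open>m \<noteq> 0\<close> by simp
      qed
      hence "N = L" using min_min[OF L LN] unfolding N_def by blast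
      hence "Lc \<subseteq> M" unfolding Lc_def N_def by blast
      thus "M = Lc" using M by blast
    qed
    thus ?thesis using zc unfolding PP_def by blast
  qed
qed

lemma PP_right: "PP x \<Longrightarrow> PP (x * c)"
  using Lc_min unfolding PP_def by fastforce

lemma PP_reg: "semisimple TYPE('a::complex_banach_algebra_1) \<Longrightarrow> PP (x::'a) \<Longrightarrow> \<exists>c. x * c * x = x"
  unfolding PP_def using regular by fastforce

lemma socle_0: "0 \<in> socle"
  unfolding socle_def by (auto intro!: exI[of _ "[]"])

lemma socle_PP_add: "PP x \<Longrightarrow> s \<in> socle \<Longrightarrow> x + s \<in> socle"
proof -
  assume P: "PP x" and s: "s \<in> socle"
  then obtain xs where xs: "s = sum_list xs" "\<forall>x\<in>set xs. \<exists>L. minimal_left_ideal L \<and> x \<in> L"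
    unfolding socle_def by blast
  show ?thesis
  proof (cases "x = 0")
    case True thus ?thesis using s by simp
  next
    case False
    hence "\<exists>L. minimal_left_ideal L \<and> x \<in> L" using P unfolding PP_def by blast
    hence "\<forall>y\<in>set (x # xs). \<exists>L. minimal_left_ideal L \<and> y \<in> L" using xs by auto
    moreover have "x + s = sum_list (x # xs)" using xs by simp
    ultimately show ?thesis unfolding socle_def by blast
  qed
qed

lemma socle_list: "\<forall>x\<in>set xs. PP x \<Longrightarrow> sum_list xs \<in> socle"
  by (induction xs) (auto simp: socle_0 socle_PP_add)

lemma PP_socle: "PP x \<Longrightarrow> x \<in> socle"
  using socle_list[of "[x]"] by simp

lemma socle_elim: "s \<in> socle \<Longrightarrow> \<exists>xs. s = sum_list xs \<and> (\<forall>x\<in>set xs. PP x)"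
  unfolding socle_def PP_def by blast

lemma socle_add: "s \<in> socle \<Longrightarrow> t \<in> socle \<Longrightarrow> s + t \<in> socle"
proof -
  assume "s \<in> socle" "t \<in> socle"
  then obtain xs ys where "s = sum_list xs" "\<forall>x\<in>set xs. PP x" "t = sum_list ys" "\<forall>x\<in>set ys. PP x"
    using socle_elim by metis
  thus ?thesis using socle_list[of "xs @ ys"] by auto
qed

lemma socle_lmult: "s \<in> socle \<Longrightarrow> a * s \<in> socle"
proof -
  assume "s \<in> socle"
  then obtain xs where "s = sum_list xs" "\<forall>x\<in>set xs. PP x" using socle_elim by metis
  moreover have "a * sum_list xs = sum_list (map (\<lambda>x. a * x) xs)"
    by (induction xs) (auto simp: algebra_simps)
  ultimately show ?thesis using socle_list[of "map (\<lambda>x. a * x) xs"] PP_left by auto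
qed

lemma socle_diff: "s \<in> socle \<Longrightarrow> t \<in> socle \<Longrightarrow> s - t \<in> socle"
  using socle_add[of s "(-1) * t"] socle_lmult[of t "-1"] by simp

lemma right_unit:
  fixes zs :: "'a::complex_banach_algebra_1 list"
  assumes ss: "semisimple TYPE('a)"
  shows "\<forall>z\<in>set zs. PP z \<Longrightarrow> \<exists>u. u \<in> socle \<and> u * u = u \<and> (\<forall>z\<in>set zs. z * u = z)"
proof (induction zs)
  case Nil thus ?case using socle_0 by auto
next
  case (Cons z zs)
  then obtain u where u: "u \<in> socle" "u * u = u" "\<forall>z\<in>set zs. z * u = z" by auto
  have Pz: "PP z" using Cons.prems by auto
  define z' where "z' = z - z * u"
  have "z' = z * (1 - u)" unfolding z'_def by (simp add: algebra_simps)
  hence Pz': "PP z'" using PP_right[OF Pz] by simp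
  obtain c where c: "z' * c * z' = z'" using PP_reg[OF ss Pz'] by blast
  define w where "w = c * z'"
  have ws: "w \<in> socle" unfolding w_def using PP_socle[OF PP_left[OF Pz']] .
  have z'u: "z' * u = 0" unfolding z'_def by (simp add: algebra_simps u(2))
  have wu: "w * u = 0" unfolding w_def using z'u by (simp add: mult.assoc)
  have ww: "w * w = w" unfolding w_def using c by (simp add: mult.assoc)
  define u' where "u' = u + w - u * w"
  have "u' \<in> socle" unfolding u'_def using socle_diff[OF socle_add[OF u(1) ws] socle_lmult[OF ws]] .
  moreover have "u' * u' = u'"
  proof -
    have a: "u' * u = u" unfolding u'_def by (simp add: algebra_simps u(2) wu)
    have b: "u' * w = w" unfolding u'_def by (simp add: algebra_simps ww)
    have "u' * u' = u' * (u + w - u * w)" unfolding u'_def by simp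
    also have "... = u' * u + u' * w - (u' * u) * w" by (simp add: algebra_simps)
    also have "... = u + w - u * w" using a b by simp
    finally show ?thesis unfolding u'_def .
  qed
  moreover have "\<forall>y\<in>set zs. y * u' = y"
  proof
    fix y assume "y \<in> set zs"
    hence yu: "y * u = y" using u(3) by blast
    have "y * u' = y * u + y * w - (y * u) * w" unfolding u'_def by (simp add: algebra_simps)
    thus "y * u' = y" using yu by simp
  qed
  moreover have "z * u' = z"
  proof -
    have "z * u' = z * u + (z - z * u) * w" unfolding u'_def by (simp add: algebra_simps)
    also have "(z - z * u) * w = z'" unfolding w_def z'_def[symmetric] using c by (simp add: mult.assoc)
    finally show ?thesis unfolding z'_def by simp
  qed
  ultimately show ?case by auto
qed

lemma left_unit:
  fixes zs :: "'a::complex_banach_algebra_1 list"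
  assumes ss: "semisimple TYPE('a)"
  shows "\<forall>z\<in>set zs. PP z \<Longrightarrow> \<exists>v. v \<in> socle \<and> v * v = v \<and> (\<forall>z\<in>set zs. v * z = z)"
proof (induction zs)
  case Nil thus ?case using socle_0 by auto
next
  case (Cons z zs)
  then obtain v where v: "v \<in> socle" "v * v = v" "\<forall>z\<in>set zs. v * z = z" by auto
  have Pz: "PP z" using Cons.prems by auto
  define z' where "z' = z - v * z"
  have "z' = (1 - v) * z" unfolding z'_def by (simp add: algebra_simps)
  hence Pz': "PP z'" using PP_left[OF Pz] by simp
  obtain c where c: "z' * c * z' = z'" using PP_reg[OF ss Pz'] by blast
  define w where "w = z' * c"
  have ws: "w \<in> socle" unfolding w_def using PP_socle[OF PP_right[OF Pz']] .
  have vv: "v * (v * z) = v * z" using v(2) by (simp add: mult.assoc[symmetric])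
  have vz': "v * z' = 0" unfolding z'_def by (simp add: algebra_simps vv)
  have vw: "v * w = 0" unfolding w_def using vz' by (simp add: mult.assoc[symmetric])
  have ww: "w * w = w" unfolding w_def using c by (simp add: mult.assoc[symmetric])
  define v' where "v' = v + w - w * v"
  have "v' \<in> socle" unfolding v'_def using socle_diff[OF socle_add[OF v(1) ws] socle_lmult[OF v(1)]] .
  moreover have "v' * v' = v'"
  proof -
    have vwv: "v * (w * v) = 0" by (simp add: mult.assoc[symmetric] vw)
    have a: "v * v' = v" unfolding v'_def by (simp add: algebra_simps v(2) vw vwv)
    have wwv: "w * (w * v) = w * v" by (simp add: mult.assoc[symmetric] ww)
    have b: "w * v' = w" unfolding v'_def by (simp add: algebra_simps ww wwv)
    have "v' * v' = (v + w - w * v) * v'" unfolding v'_def by simp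
    also have "... = v * v' + w * v' - w * (v * v')" by (simp add: algebra_simps)
    also have "... = v + w - w * v" using a b by simp
    finally show ?thesis unfolding v'_def .
  qed
  moreover have "\<forall>y\<in>set zs. v' * y = y"
  proof
    fix y assume "y \<in> set zs"
    hence vy: "v * y = y" using v(3) by blast
    have "v' * y = v * y + w * y - w * (v * y)" unfolding v'_def by (simp add: algebra_simps)
    thus "v' * y = y" using vy by simp
  qed
  moreover have "v' * z = z"
  proof -
    have "v' * z = v * z + w * (z - v * z)" unfolding v'_def by (simp add: algebra_simps)
    also have "w * (z - v * z) = z'" unfolding w_def z'_def[symmetric] using c by (simp add: mult.assoc)
    finally show ?thesis unfolding z'_def by simp
  qed
  ultimately show ?case by auto
qed

lemma collect_lists:
  "finite K \<Longrightarrow> K \<subseteq> (socle :: 'a::complex_banach_algebra_1 set) \<Longrightarrow>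
   \<exists>zs. (\<forall>z\<in>set zs. PP z) \<and> (\<forall>a\<in>K. \<exists>xs. set xs \<subseteq> set zs \<and> a = sum_list xs)"
proof (induction K rule: finite_induct)
  case empty thus ?case by (auto intro!: exI[of _ "[]"])
next
  case (insert a K)
  then obtain zs where zs: "\<forall>z\<in>set zs. PP z" "\<forall>b\<in>K. \<exists>xs. set xs \<subseteq> set zs \<and> b = sum_list xs" by auto
  obtain xs where xs: "a = sum_list xs" "\<forall>x\<in>set xs. PP x" using socle_elim insert.prems by blast
  have "\<forall>z\<in>set (xs @ zs). PP z" using zs xs by auto
  moreover have "\<forall>b\<in>insert a K. \<exists>ys. set ys \<subseteq> set (xs @ zs) \<and> b = sum_list ys"
  proof
    fix b assume "b \<in> insert a K"
    thus "\<exists>ys. set ys \<subseteq> set (xs @ zs) \<and> b = sum_list ys"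
    proof
      assume "b = a" thus ?thesis using xs(1) by (intro exI[of _ xs]) auto
    next
      assume "b \<in> K"
      then obtain ys where "set ys \<subseteq> set zs" "b = sum_list ys" using zs(2) by blast
      thus ?thesis by (intro exI[of _ ys]) auto
    qed
  qed
  ultimately show ?case by blast
qed

lemma sum_right: "(\<forall>x\<in>set xs. x * u = x) \<Longrightarrow> sum_list xs * (u::'a::ring) = sum_list xs"
  by (induction xs) (auto simp: algebra_simps)

lemma sum_left: "(\<forall>x\<in>set xs. u * x = x) \<Longrightarrow> (u::'a::ring) * sum_list xs = sum_list xs"
  by (induction xs) (auto simp: algebra_simps)

lemma local_unit:
  fixes K :: "'a::complex_banach_algebra_1 set"
  assumes ss: "semisimple TYPE('a)" and K: "finite K" "K \<subseteq> socle"
  shows "\<exists>p\<in>socle. \<forall>a\<in>K. p * a = a \<and> a * p = a"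
proof -
  obtain zs where zs: "\<forall>z\<in>set zs. PP z" "\<forall>a\<in>K. \<exists>xs. set xs \<subseteq> set zs \<and> a = sum_list xs"
    using collect_lists[OF K] by blast
  obtain u where u: "u \<in> socle" "\<forall>z\<in>set zs. z * u = z" using right_unit[OF ss zs(1)] by blast
  obtain v where v: "v \<in> socle" "\<forall>z\<in>set zs. v * z = z" using left_unit[OF ss zs(1)] by blast
  define p where "p = u + v - u * v"
  have "p \<in> socle" unfolding p_def using socle_diff[OF socle_add[OF u(1) v(1)] socle_lmult[OF v(1)]] .
  moreover have "\<forall>a\<in>K. p * a = a \<and> a * p = a"
  proof
    fix a assume "a \<in> K"
    then obtain xs where xs: "set xs \<subseteq> set zs" "a = sum_list xs" using zs(2) by blast
    have au: "a * u = a" using sum_right[of xs u] u(2) xs by auto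
    have va: "v * a = a" using sum_left[of xs v] v(2) xs by auto
    have "p * a = u * a + v * a - u * (v * a)" unfolding p_def by (simp add: algebra_simps)
    hence 1: "p * a = a" using va by simp
    have "a * p = a * u + a * v - (a * u) * v" unfolding p_def by (simp add: algebra_simps)
    hence 2: "a * p = a" using au by simp
    show "p * a = a \<and> a * p = a" using 1 2 by blast
  qed
  ultimately show ?thesis by blast
qed

theorem theorem1p7:
  assumes "semisimple TYPE('a::complex_banach_algebra_1)"
    and "(socle :: 'a set) \<noteq> {0}"
  shows "has_two_sided_approx_identity (socle :: 'a set)"
proof -
  define B where "B = {K. finite K \<and> K \<subseteq> (socle :: 'a set)}"
  define S where "S = (\<lambda>K. {e \<in> (socle :: 'a set). \<forall>a\<in>K. e * a = a \<and> a * e = a})"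
  define F where "F = (INF K\<in>B. principal (S K))"
  have Bne: "B \<noteq> {}" unfolding B_def by auto
  have dir: "\<And>a b. a \<in> B \<Longrightarrow> b \<in> B \<Longrightarrow> \<exists>x\<in>B. principal (S x) \<le> inf (principal (S a)) (principal (S b))"
  proof -
    fix a b assume "a \<in> B" "b \<in> B"
    hence "a \<union> b \<in> B" unfolding B_def by auto
    moreover have "S (a \<union> b) \<subseteq> S a \<inter> S b" unfolding S_def by auto
    ultimately show "\<exists>x\<in>B. principal (S x) \<le> inf (principal (S a)) (principal (S b))"
      by (intro bexI[of _ "a \<union> b"]) (auto simp: inf_principal)
  qed
  have ev: "\<And>P. eventually P F \<longleftrightarrow> (\<exists>K\<in>B. \<forall>e\<in>S K. P e)"
    unfolding F_def by (subst eventually_INF_base[OF Bne dir]) (auto simp: eventually_principal)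
  have "F \<noteq> bot"
  proof
    assume "F = bot"
    hence "eventually (\<lambda>_. False) F" by simp
    then obtain K where "K \<in> B" "\<forall>e\<in>S K. False" using ev by blast
    moreover obtain p where "p \<in> socle" "\<forall>a\<in>K. p * a = a \<and> a * p = a"
      using local_unit[OF assms(1)] \<open>K \<in> B\<close> unfolding B_def by blast
    ultimately show False unfolding S_def by blast
  qed
  moreover have "eventually (\<lambda>e. e \<in> socle) F"
    unfolding ev by (rule bexI[of _ "{}"]) (auto simp: S_def B_def)
  moreover have "\<forall>a\<in>socle. ((\<lambda>e. e * a) \<longlongrightarrow> a) F \<and> ((\<lambda>e. a * e) \<longlongrightarrow> a) F"
  proof
    fix a :: 'a assume a: "a \<in> socle"
    have "{a} \<in> B" using a unfolding B_def by auto
    hence e1: "eventually (\<lambda>e. e * a = a) F" and e2: "eventually (\<lambda>e. a * e = a) F"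
      unfolding ev S_def by blast+
    show "((\<lambda>e. e * a) \<longlongrightarrow> a) F \<and> ((\<lambda>e. a * e) \<longlongrightarrow> a) F"
      using tendsto_eventually[OF e1] tendsto_eventually[OF e2] by (rule conjI)
  qed
  ultimately show ?thesis unfolding has_two_sided_approx_identity_def by blast
qed

end
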